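(* Under the standing assumptions (A) below, let $\Omega'=\{t\in[0,L]:\tau(t)\ne\pm\lambda\}\cup\Omega$. Then $\Omega'\setminus\Omega$ is a discrete set.
   Context: Standing assumptions (A): $n\ge2$, $L>0$, $\beta\colon[0,L]\to(0,\infty)$ of bounded variation with $1/\beta$ bounded; $\tau\in W^{1,\infty}((0,L);S^{n-1})$ with $k=\operatorname{ess\,sup}|\tau'|>0$; $\lambda\in S^{n-1}$ and $u\in W^{1,\infty}((0,L);\mathbb{R}^n)\setminus\{0\}$ such that $u'+(u\cdot\tau')\tau=\beta(\lambda-(\lambda\cdot\tau)\tau)$ and $|u|\tau'=ku$ a.e. in $(0,L)$; $f=k|u|$, which then satisfies $f'=\beta\,\lambda\cdot\tau'$ and $f(\tau''+k^2\tau)=\beta k^2\,\mathrm{proj}^\perp_{\tau,\tau'}(\lambda)$ weakly in $(0,L)$ (where $\mathrm{proj}^\perp_{V,W}$ is the orthogonal projection onto the orthogonal complement of $\mathrm{span}\{V,W\}$); $\Omega=\{t\in[0,L]:f(t)>0\}$ (open relative to $[0,L]$); and $\tau(t),\tau'(t),\lambda$ are linearly dependent for every $t\in\Omega$ (note $\tau'$ is continuous on $\Omega$). *)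

theory Defs
  imports "HOL-Analysis.Analysis" "HOL-Probability.Essential_Supremum"
begin

definition bounded_variation_on :: "(real \<Rightarrow> real) \<Rightarrow> real \<Rightarrow> real \<Rightarrow> bool" where
  "bounded_variation_on g a b \<longleftrightarrow>
     (\<exists>V. \<forall>ts::real list. sorted ts \<and> set ts \<subseteq> {a..b} \<longrightarrow>
        (\<Sum>i<length ts - 1. \<bar>g (ts ! Suc i) - g (ts ! i)\<bar>) \<le> V)"

end

theory Submission imports Defs begin

lemma mono_lemma:
  fixes h :: "real \<Rightarrow> real"
  assumes ab: "a \<le> b" and lip: "C-lipschitz_on {a..b} h"
    and N: "negligible N"
    and der: "\<And>t. t \<in> {a<..<b} - N \<Longrightarrow> \<exists>d>0. (h has_real_derivative d) (at t)"
  shows "h a \<le> h b"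
proof (rule ccontr)
  assume "\<not> h a \<le> h b"
  hence hlt: "h b < h a" by simp
  have cont: "continuous_on {a..b} h" using lip by (rule lipschitz_on_continuous_on)
  define N' where "N' = (N \<union> {a,b}) \<inter> {a..b}"
  have negN': "negligible N'" unfolding N'_def using N
    by (metis negligible_Int negligible_Un negligible_finite finite.emptyI finite_insert)
  have "negligible (h ` N')"
  proof (rule negligible_locally_Lipschitz_image[OF _ negN'])
    fix x assume "x \<in> N'"
    show "\<exists>T B. open T \<and> x \<in> T \<and> (\<forall>y\<in>N' \<inter> T. norm (h y - h x) \<le> B * norm (y - x))"
      apply (rule exI[of _ UNIV], rule exI[of _ C])
    proof (intro conjI ballI)
      fix z assume "z \<in> N' \<inter> UNIV"
      hence "z \<in> {a..b}" "x \<in> {a..b}" using \<open>x \<in> N'\<close> unfolding N'_def by auto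
      from lipschitz_onD[OF lip this] show "norm (h z - h x) \<le> C * norm (z - x)"
        by (simp add: dist_norm)
    qed auto
  qed simp
  moreover have "\<not> negligible {h b<..<h a}"
    using open_not_negligible[of "{h b<..<h a}"] hlt by auto
  ultimately obtain y where y: "y \<in> {h b<..<h a}" "y \<notin> h ` N'"
    by (metis negligible_subset subsetI)
  define S where "S = {t\<in>{a..b}. h t = y}"
  have Sne: "S \<noteq> {}" using IVT2'[of h b y a] y ab cont unfolding S_def by force
  have Scl: "closed S" unfolding S_def
    using continuous_closed_preimage_constant[OF cont closed_atLeastAtMost] by simp
  have Sbd: "bdd_above S" unfolding S_def by (auto intro: bdd_aboveI[of _ b])
  define t where "t = Sup S"
  have tS: "t \<in> S" unfolding t_def using closed_contains_Sup[OF Sne Sbd Scl] .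
  have ub: "s \<le> t" if "s \<in> S" for s unfolding t_def using cSup_upper[OF that Sbd] .
  have tN: "t \<notin> N'" using tS y(2) unfolding S_def by force
  have tab: "t \<in> {a<..<b} - N" using tS tN unfolding S_def N'_def by auto
  then obtain d where d: "d > 0" "(h has_real_derivative d) (at t)" using der by blast
  obtain e where e: "e > 0" "\<forall>r>0. r < e \<longrightarrow> h t < h (t + r)"
    using DERIV_pos_inc_right[OF d(2) d(1)] by blast
  define s where "s = t + min (e/2) ((b - t)/2)"
  have s1: "t < s" "s < b" "s - t < e" using e(1) tab unfolding s_def by (auto simp: min_def field_simps)
  have "h t < h s" using e(2)[rule_format, of "s - t"] s1 by auto
  hence "y < h s" using tS unfolding S_def by auto
  moreover have "continuous_on {s..b} h" using cont continuous_on_subset s1 tab by force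
  ultimately obtain r where r: "r \<ge> s" "r \<le> b" "h r = y"
    using IVT2'[of h b y s] y s1 by force
  hence "r \<in> S" using s1 tab unfolding S_def by auto
  thus False using ub r s1 by force
qed
theorem mainTheorem15:
  fixes L k :: real
    and \<beta> :: "real \<Rightarrow> real"
    and \<tau> \<tau>' u u' :: "real \<Rightarrow> real ^ 'n"
    and lam :: "real ^ 'n"
  assumes n2: "CARD('n) \<ge> 2"
    and Lpos: "L > 0"
    and beta_pos: "\<forall>t\<in>{0..L}. \<beta> t > 0"
    and beta_bv: "bounded_variation_on \<beta> 0 L"
    and beta_inv_bdd: "bounded ((\<lambda>t. 1 / \<beta> t) ` {0..L})"
    and tau_lip: "\<exists>C. C-lipschitz_on {0..L} \<tau>"
    and tau_sphere: "\<forall>t\<in>{0..L}. norm (\<tau> t) = 1"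
    and tau_deriv: "AE t in lborel. t \<in> {0<..<L} \<longrightarrow> (\<tau> has_vector_derivative \<tau>' t) (at t)"
    and k_def: "esssup (lebesgue_on {0<..<L}) (\<lambda>t. ereal (norm (\<tau>' t))) = ereal k"
    and kpos: "k > 0"
    and lam_unit: "norm lam = 1"
    and u_lip: "\<exists>C. C-lipschitz_on {0..L} u"
    and u_deriv: "AE t in lborel. t \<in> {0<..<L} \<longrightarrow> (u has_vector_derivative u' t) (at t)"
    and u_nonzero: "\<exists>t\<in>{0..L}. u t \<noteq> 0"
    and eq1: "AE t in lborel. t \<in> {0<..<L} \<longrightarrow>
               u' t + (u t \<bullet> \<tau>' t) *\<^sub>R \<tau> t = \<beta> t *\<^sub>R (lam - (lam \<bullet> \<tau> t) *\<^sub>R \<tau> t)"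
    and eq2: "AE t in lborel. t \<in> {0<..<L} \<longrightarrow> norm (u t) *\<^sub>R \<tau>' t = k *\<^sub>R u t"
    and tau'_cont: "continuous_on {t\<in>{0..L}. k * norm (u t) > 0} \<tau>'"
    and lindep: "\<forall>t\<in>{t\<in>{0..L}. k * norm (u t) > 0}.
                   \<exists>a b c. (a, b, c) \<noteq> (0::real, 0::real, 0::real) \<and>
                     a *\<^sub>R \<tau> t + b *\<^sub>R \<tau>' t + c *\<^sub>R lam = 0"
  shows "discrete (({t\<in>{0..L}. \<tau> t \<noteq> lam \<and> \<tau> t \<noteq> - lam} \<union> {t\<in>{0..L}. k * norm (u t) > 0})
                    - {t\<in>{0..L}. k * norm (u t) > 0})"
proof (rule discreteI)
  let ?Om = "{t\<in>{0..L}. k * norm (u t) > 0}"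
  fix t0 assume t0X: "t0 \<in> ({t\<in>{0..L}. \<tau> t \<noteq> lam \<and> \<tau> t \<noteq> - lam} \<union> ?Om) - ?Om"
  hence t0: "t0 \<in> {0..L}" "\<tau> t0 \<noteq> lam" "\<tau> t0 \<noteq> -lam" "\<not> k * norm (u t0) > 0" by auto
  have ut0: "u t0 = 0" using t0(4) kpos by (metis mult_pos_pos zero_less_norm_iff)
  define l where "l = lam \<bullet> \<tau> t0"
  define v where "v = lam - l *\<^sub>R \<tau> t0"
  have nt0: "\<tau> t0 \<bullet> \<tau> t0 = 1" using tau_sphere t0(1) by (simp add: norm_eq_1)
  have ll: "lam \<bullet> lam = 1" using lam_unit by (simp add: norm_eq_1)
  have tv: "\<tau> t0 \<bullet> v = 0" unfolding v_def l_def by (simp add: inner_diff_right nt0 inner_commute)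
  have lv: "v \<bullet> v = lam \<bullet> v"
  proof -
    have "v \<bullet> v = (lam - l *\<^sub>R \<tau> t0) \<bullet> v" using v_def by simp
    also have "\<dots> = lam \<bullet> v - l * (\<tau> t0 \<bullet> v)" by (simp add: inner_diff_left)
    finally show ?thesis using tv by simp
  qed
  have vne: "v \<noteq> 0"
  proof
    assume "v = 0"
    hence lam_eq: "lam = l *\<^sub>R \<tau> t0" unfolding v_def by simp
    hence "lam \<bullet> lam = l * l * (\<tau> t0 \<bullet> \<tau> t0)" by simp
    hence "l * l = 1" using ll nt0 by simp
    hence "l = 1 \<or> l = -1" by (metis mult_cancel_left1 square_eq_1_iff)
    thus False using lam_eq t0(2,3) by auto
  qed
  define V where "V = v \<bullet> v"
  have Vpos: "V > 0" using vne unfolding V_def by simp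
  obtain B where B: "\<forall>x\<in>(\<lambda>t. 1 / \<beta> t) ` {0..L}. norm x \<le> B"
    using beta_inv_bdd unfolding bounded_iff by blast
  define m where "m = 1 / max B 1"
  have mpos: "m > 0" unfolding m_def by simp
  have beta_ge: "\<beta> t \<ge> m" if "t \<in> {0..L}" for t
  proof -
    have bp: "\<beta> t > 0" using beta_pos that by auto
    have "norm (1 / \<beta> t) \<le> B" using B that by blast
    hence "1 / \<beta> t \<le> max B 1" using bp by simp
    thus ?thesis unfolding m_def using bp by (simp add: field_simps)
  qed
  obtain Cu where Cu: "Cu-lipschitz_on {0..L} u" using u_lip by blast
  obtain Ct where Ct: "Ct-lipschitz_on {0..L} \<tau>" using tau_lip by blast
  have ucont: "continuous_on {0..L} u" using Cu by (rule lipschitz_on_continuous_on)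
  have tcont: "continuous_on {0..L} \<tau>" using Ct by (rule lipschitz_on_continuous_on)
  define phi where "phi t = lam \<bullet> v - (lam \<bullet> \<tau> t) * (\<tau> t \<bullet> v)" for t
  have phicont: "continuous_on {0..L} phi" unfolding phi_def
    by (intro continuous_intros tcont)
  have phit0: "phi t0 = V" unfolding phi_def V_def using tv lv by simp
  define c where "c = m * V / 4"
  have cpos: "c > 0" unfolding c_def using mpos Vpos by simp
  have nvpos: "norm v > 0" using vne by simp
  obtain d1 where d1: "d1 > 0" "\<forall>x'\<in>{0..L}. dist x' t0 < d1 \<longrightarrow> dist (phi x') (phi t0) < V/2"
    using phicont t0(1) Vpos unfolding continuous_on_iff by (meson half_gt_zero)
  obtain d2 where d2: "d2 > 0" "\<forall>x'\<in>{0..L}. dist x' t0 < d2 \<longrightarrow> dist (u x') (u t0) < c / (k * norm v)"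
    using ucont t0(1) cpos kpos nvpos unfolding continuous_on_iff
    by (metis divide_pos_pos mult_pos_pos)
  define \<delta> where "\<delta> = min d1 d2"
  have dpos: "\<delta> > 0" unfolding \<delta>_def using d1 d2 by simp
  have near: "phi t > V/2 \<and> k * norm (u t) * norm v < c" if "t \<in> {0..L}" "\<bar>t - t0\<bar> < \<delta>" for t
  proof
    have "dist (phi t) (phi t0) < V/2" using d1(2) that unfolding \<delta>_def dist_real_def by auto
    thus "phi t > V/2" using phit0 unfolding dist_real_def by linarith
    have "norm (u t) < c / (k * norm v)" using d2(2) that ut0 unfolding \<delta>_def dist_real_def by auto
    thus "k * norm (u t) * norm v < c" using kpos nvpos by (simp add: field_simps)
  qed
  have AE: "AE t in lborel. t \<in> {0<..<L} \<longrightarrow> (u has_vector_derivative u' t) (at t) \<and>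
               u' t + (u t \<bullet> \<tau>' t) *\<^sub>R \<tau> t = \<beta> t *\<^sub>R (lam - (lam \<bullet> \<tau> t) *\<^sub>R \<tau> t) \<and>
               norm (u t) *\<^sub>R \<tau>' t = k *\<^sub>R u t"
    using u_deriv eq1 eq2 by eventually_elim auto
  then obtain N where N: "\<And>t. t \<in> space lborel - N \<Longrightarrow> t \<in> {0<..<L} \<longrightarrow> (u has_vector_derivative u' t) (at t) \<and>
               u' t + (u t \<bullet> \<tau>' t) *\<^sub>R \<tau> t = \<beta> t *\<^sub>R (lam - (lam \<bullet> \<tau> t) *\<^sub>R \<tau> t) \<and>
               norm (u t) *\<^sub>R \<tau>' t = k *\<^sub>R u t" "N \<in> null_sets lborel"
    by (elim AE_E3) blast
  have negN: "negligible N" using N(2) by (simp add: negligible_iff_null_sets null_sets_completionI)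
  define h where "h t = u t \<bullet> v - c/2 * t" for t
  have hder: "\<exists>d>0. (h has_real_derivative d) (at s)" if s: "s \<in> {0<..<L} - N" "\<bar>s - t0\<bar> < \<delta>" for s
  proof -
    have P: "(u has_vector_derivative u' s) (at s)"
      "u' s + (u s \<bullet> \<tau>' s) *\<^sub>R \<tau> s = \<beta> s *\<^sub>R (lam - (lam \<bullet> \<tau> s) *\<^sub>R \<tau> s)"
      "norm (u s) *\<^sub>R \<tau>' s = k *\<^sub>R u s" using N(1)[of s] s by auto
    have "((\<lambda>t. u t \<bullet> v) has_derivative (\<lambda>x. (x *\<^sub>R u' s) \<bullet> v)) (at s)"
      using has_derivative_inner_left[OF P(1)[unfolded has_vector_derivative_def]] .
    moreover have "(\<lambda>x. (x *\<^sub>R u' s) \<bullet> v) = (*) (u' s \<bullet> v)" by (auto simp: fun_eq_iff mult.commute)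
    ultimately have d1: "((\<lambda>t. u t \<bullet> v) has_real_derivative (u' s \<bullet> v)) (at s)"
      by (simp add: has_field_derivative_def)
    have d2: "((\<lambda>t. c/2 * t) has_real_derivative c/2) (at s)"
      by (auto intro!: derivative_eq_intros)
    have hd: "(h has_real_derivative (u' s \<bullet> v - c/2)) (at s)"
      unfolding h_def[abs_def] using DERIV_diff[OF d1 d2] .
    have ueq: "u' s = \<beta> s *\<^sub>R (lam - (lam \<bullet> \<tau> s) *\<^sub>R \<tau> s) - (u s \<bullet> \<tau>' s) *\<^sub>R \<tau> s"
      using P(2) by (metis add_diff_cancel)
    have uv: "u' s \<bullet> v = \<beta> s * phi s - (u s \<bullet> \<tau>' s) * (\<tau> s \<bullet> v)"
      unfolding ueq phi_def by (simp add: inner_diff_left algebra_simps)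
    have sL: "s \<in> {0..L}" using s by auto
    have n1: "\<bar>u s \<bullet> \<tau>' s\<bar> \<le> k * norm (u s)"
    proof -
      have "\<bar>u s \<bullet> \<tau>' s\<bar> \<le> norm (u s) * norm (\<tau>' s)" by (rule Cauchy_Schwarz_ineq2)
      also have "\<dots> = norm (norm (u s) *\<^sub>R \<tau>' s)" by simp
      also have "\<dots> = k * norm (u s)" using P(3) kpos by simp
      finally show ?thesis .
    qed
    have n2: "\<bar>\<tau> s \<bullet> v\<bar> \<le> norm v"
      using Cauchy_Schwarz_ineq2[of "\<tau> s" v] tau_sphere sL by simp
    have "\<bar>(u s \<bullet> \<tau>' s) * (\<tau> s \<bullet> v)\<bar> \<le> k * norm (u s) * norm v"
      unfolding abs_mult by (rule mult_mono[OF n1 n2]) (use kpos in auto)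
    also have "\<dots> < c" using near[OF sL s(2)] by simp
    finally have t2: "\<bar>(u s \<bullet> \<tau>' s) * (\<tau> s \<bullet> v)\<bar> < c" .
    have "\<beta> s * phi s \<ge> m * (V/2)"
      using near[OF sL s(2)] beta_ge[OF sL] mpos Vpos by (intro mult_mono) auto
    hence "u' s \<bullet> v > c" using t2 uv unfolding c_def by auto
    thus ?thesis using hd cpos by (intro exI[of _ "u' s \<bullet> v - c/2"]) auto
  qed
  have hlip: "(Cu * norm v + c/2)-lipschitz_on {0..L} h"
  proof (rule lipschitz_onI)
    have Cu0: "Cu \<ge> 0" using lipschitz_on_nonneg[OF Cu] .
    show "0 \<le> Cu * norm v + c/2" using Cu0 cpos by simp
    fix x y assume xy: "x \<in> {0..L}" "y \<in> {0..L}"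
    have "dist (h x) (h y) = \<bar>(u x - u y) \<bullet> v - c/2 * (x - y)\<bar>"
      unfolding h_def dist_real_def by (simp add: inner_diff_left algebra_simps diff_divide_distrib)
    also have "\<dots> \<le> \<bar>(u x - u y) \<bullet> v\<bar> + c/2 * \<bar>x - y\<bar>"
      using cpos abs_triangle_ineq4[of "(u x - u y) \<bullet> v" "c/2 * (x - y)"] by (simp add: abs_mult)
    also have "\<bar>(u x - u y) \<bullet> v\<bar> \<le> norm (u x - u y) * norm v" by (rule Cauchy_Schwarz_ineq2)
    also have "norm (u x - u y) \<le> Cu * \<bar>x - y\<bar>"
      using lipschitz_onD[OF Cu xy] by (simp add: dist_norm)
    finally show "dist (h x) (h y) \<le> (Cu * norm v + c / 2) * dist x y"
      using nvpos by (simp add: dist_real_def algebra_simps mult_right_mono)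
  qed
  show "t0 isolated_in (({t\<in>{0..L}. \<tau> t \<noteq> lam \<and> \<tau> t \<noteq> - lam} \<union> ?Om) - ?Om)"
    unfolding isolated_in_dist_Ex_iff
  proof (intro conjI exI[of _ \<delta>] ballI impI)
    show "t0 \<in> ({t\<in>{0..L}. \<tau> t \<noteq> lam \<and> \<tau> t \<noteq> - lam} \<union> ?Om) - ?Om" by (rule t0X)
    show "\<delta> > 0" by (rule dpos)
    fix y assume yX: "y \<in> ({t\<in>{0..L}. \<tau> t \<noteq> lam \<and> \<tau> t \<noteq> - lam} \<union> ?Om) - ?Om"
      and yd: "dist t0 y < \<delta>"
    hence yL: "y \<in> {0..L}" and "\<not> k * norm (u y) > 0" by auto
    hence uy: "u y = 0" using kpos by (metis mult_pos_pos zero_less_norm_iff)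
    show "y = t0"
    proof (rule ccontr)
      assume "y \<noteq> t0"
      hence "y < t0 \<or> t0 < y" by auto
      thus False
      proof
        assume lt: "y < t0"
        have "h y \<le> h t0"
        proof (rule mono_lemma[where C="Cu * norm v + c/2", OF _ lipschitz_on_mono[OF hlip] negN])
          show "y \<le> t0" using lt by simp
          show "{y..t0} \<subseteq> {0..L}" using yL t0(1) by auto
          fix s assume "s \<in> {y<..<t0} - N"
          thus "\<exists>d>0. (h has_real_derivative d) (at s)"
            using hder[of s] yL t0(1) yd unfolding dist_real_def by auto
        qed simp
        thus False using uy ut0 lt cpos unfolding h_def by (simp add: mult_less_cancel_left)
      next
        assume lt: "t0 < y"
        have "h t0 \<le> h y"
        proof (rule mono_lemma[where C="Cu * norm v + c/2", OF _ lipschitz_on_mono[OF hlip] negN])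
          show "t0 \<le> y" using lt by simp
          show "{t0..y} \<subseteq> {0..L}" using yL t0(1) by auto
          fix s assume "s \<in> {t0<..<y} - N"
          thus "\<exists>d>0. (h has_real_derivative d) (at s)"
            using hder[of s] yL t0(1) yd unfolding dist_real_def by auto
        qed simp
        thus False using uy ut0 lt cpos unfolding h_def by (simp add: mult_less_cancel_left)
      qed
    qed
  qed
qed

end
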